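(* Let $W$ be a balanced tetrahedral erasure channel with $Q(W)\le 2$. Then $Q(W^{s})\le 2$ and $Q(W^{p})\le 2$.
   Context: $\mathrm{TEC}(p,q,r,s,t)$ denotes a tetrahedral erasure channel with parameters $p,q,r,s,t\ge0$ summing to $1$. Its entropy is $H=\frac{q+r+s}{2}+t$, its edge mass is $E=q+r+s$, and its Quetelet index is $Q=E/(H(1-H))$ (defined when $0<H<1$). It is balanced if $q=r=s$. For $W=\mathrm{TEC}(p,q,r,s,t)$, the serial child is $W^{s}=\mathrm{TEC}(p^2,\ ps+sq+qp,\ pq+qr+rp,\ pr+rs+sp,\ 1-\text{(sum of the other four)})$ and the parallel child is $W^{p}=\mathrm{TEC}(1-\text{(sum of the other four)},\ ts+sq+qt,\ tq+qr+rt,\ tr+rs+st,\ t^2)$. *)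

theory Defs
  imports Complex_Main
begin

type_synonym tec = "real \<times> real \<times> real \<times> real \<times> real"

definition is_TEC :: "tec \<Rightarrow> bool" where
  "is_TEC W = (case W of (p,q,r,s,t) \<Rightarrow>
     p \<ge> 0 \<and> q \<ge> 0 \<and> r \<ge> 0 \<and> s \<ge> 0 \<and> t \<ge> 0 \<and> p + q + r + s + t = 1)"

definition tec_entropy :: "tec \<Rightarrow> real" where
  "tec_entropy W = (case W of (p,q,r,s,t) \<Rightarrow> (q + r + s) / 2 + t)"

definition tec_edge_mass :: "tec \<Rightarrow> real" where
  "tec_edge_mass W = (case W of (p,q,r,s,t) \<Rightarrow> q + r + s)"

definition quetelet :: "tec \<Rightarrow> real" where
  "quetelet W = tec_edge_mass W / (tec_entropy W * (1 - tec_entropy W))"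

definition balanced :: "tec \<Rightarrow> bool" where
  "balanced W = (case W of (p,q,r,s,t) \<Rightarrow> q = r \<and> r = s)"

definition serial_child :: "tec \<Rightarrow> tec" where
  "serial_child W = (case W of (p,q,r,s,t) \<Rightarrow>
     (let a = p^2; b = p*s + s*q + q*p; c = p*q + q*r + r*p; d = p*r + r*s + s*p
      in (a, b, c, d, 1 - (a + b + c + d))))"

definition parallel_child :: "tec \<Rightarrow> tec" where
  "parallel_child W = (case W of (p,q,r,s,t) \<Rightarrow>
     (let b = t*s + s*q + q*t; c = t*q + q*r + r*t; d = t*r + r*s + s*t; e = t^2
      in (1 - (b + c + d + e), b, c, d, e)))"

end

theory Submission
  imports Defs
begin

lemma key:
  fixes p q t :: real
  assumes "p \<ge> 0" "q \<ge> 0" "t \<ge> 0" "p + 3*q + t = 1"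
    and "9*q^2 \<le> 4*p*t" and "0 < 3*q/2 + t" and "3*q/2 + t < 1"
  shows "0 < 1 - p^2 - 3*(2*p*q+q^2)/2 \<and> 1 - p^2 - 3*(2*p*q+q^2)/2 < 1
     \<and> 3*(2*p*q+q^2) \<le> 2*(1 - p^2 - 3*(2*p*q+q^2)/2)*(p^2 + 3*(2*p*q+q^2)/2)"
proof -
  define v where "v = p^2 + 3*p*q + 3*q^2/2"
  have t: "t = 1 - p - 3*q" using assms by linarith
  have pv: "p - v = p*t - 3*q^2/2" unfolding v_def t by (simp add: algebra_simps power2_eq_square)
  have pt: "p*t \<ge> 0" using assms by simp
  have "p - v \<ge> 0" using pv assms(5) pt by (simp add: power2_eq_square)
  moreover have "v \<ge> 0" unfolding v_def using assms by simp
  ultimately have A: "(p - v)*(p+v) \<ge> 0" by simp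
  have id: "2*(1 - p^2 - 3*(2*p*q+q^2)/2)*(p^2 + 3*(2*p*q+q^2)/2) - 3*(2*p*q+q^2) = 2*((p - v)*(p+v))"
    unfolding v_def t by (simp add: field_simps power2_eq_square)
  have c3: "3*(2*p*q+q^2) \<le> 2*(1 - p^2 - 3*(2*p*q+q^2)/2)*(p^2 + 3*(2*p*q+q^2)/2)"
    using id A by linarith
  have vv: "v = p^2 + 3*(2*p*q+q^2)/2" unfolding v_def by (simp add: algebra_simps)
  have "p > 0 \<or> q > 0" using assms by auto
  moreover have "p*q \<ge> 0" using assms by simp
  moreover have "p*p > 0 \<or> q*q > 0" using \<open>p > 0 \<or> q > 0\<close> by auto
  moreover have "p*p \<ge> 0" "q*q \<ge> 0" by simp_all
  ultimately have "v > 0" unfolding v_def power2_eq_square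
    by linarith
  moreover have "v < 1"
  proof -
    have "v \<le> (p + 3*q)^2" unfolding v_def using assms by (simp add: power2_eq_square algebra_simps)
    moreover have "p + 3*q \<le> 1" using assms by linarith
    hence "(p+3*q)^2 \<le> p + 3*q" using assms by (simp add: power2_eq_square mult_le_cancel_left1)
    moreover have "p + 3*q < 1 \<or> (v < (p+3*q)^2)"
    proof (cases "q = 0")
      case True
      then have "p < 1" using assms by auto
      then show ?thesis using assms True by linarith
    next
      case False
      hence "q > 0" using assms by simp
      moreover have "p*q \<ge> 0" using assms by simp
      ultimately have "q*q > 0" "p*q \<ge> 0" by simp_all
      hence "v < (p+3*q)^2" unfolding v_def power2_eq_square
        by (simp add: algebra_simps)
      then show ?thesis by simp
    qed
    ultimately show ?thesis using assms(3,4) by linarith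
  qed
  ultimately have "0 < p^2 + 3*(2*p*q+q^2)/2" "p^2 + 3*(2*p*q+q^2)/2 < 1" using vv by simp_all
  thus ?thesis using c3 by linarith
qed

theorem mainTheorem9:
  fixes W :: tec
  assumes "is_TEC W"
    and "balanced W"
    and "0 < tec_entropy W" and "tec_entropy W < 1"
    and "quetelet W \<le> 2"
  shows "0 < tec_entropy (serial_child W) \<and> tec_entropy (serial_child W) < 1
           \<and> quetelet (serial_child W) \<le> 2
         \<and> 0 < tec_entropy (parallel_child W) \<and> tec_entropy (parallel_child W) < 1
           \<and> quetelet (parallel_child W) \<le> 2"
proof -
  obtain p q r s t where W: "W = (p,q,r,s,t)" by (cases W) auto
  have rs: "r = q" "s = q" using assms(2) W by (auto simp: balanced_def)
  have nn: "p \<ge> 0" "q \<ge> 0" "t \<ge> 0" "p + 3*q + t = 1"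
    using assms(1) W rs by (auto simp: is_TEC_def)
  have H0: "0 < 3*q/2 + t" "3*q/2 + t < 1"
    using assms(3,4) W rs by (auto simp: tec_entropy_def)
  have "3*q / ((3*q/2+t)*(1-(3*q/2+t))) \<le> 2"
    using assms(5) W rs by (simp add: quetelet_def tec_entropy_def tec_edge_mass_def)
  hence "3*q \<le> 2*((3*q/2+t)*(1-(3*q/2+t)))"
    using H0 by (simp add: pos_divide_le_eq)
  moreover have "p = 1 - 3*q - t" using nn(4) by linarith
  hence "p*t = (1 - 3*q - t)*t" by simp
  hence "p*t = t - t*t - 3*q*t" by (simp add: algebra_simps)
  ultimately have Q: "9*q^2 \<le> 4*p*t"
    by (simp add: field_simps power2_eq_square)
  have Q': "9*q^2 \<le> 4*t*p" using Q by (simp add: algebra_simps)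
  have H0': "0 < 3*q/2 + p" "3*q/2 + p < 1" using H0 nn by linarith+
  note K1 = key[OF nn(1,2,3) nn(4) Q H0]
  note K2 = key[of t q p, OF nn(3,2,1) _ Q' H0']
  have K2': "0 < 1 - t^2 - 3*(2*t*q+q^2)/2 \<and> 1 - t^2 - 3*(2*t*q+q^2)/2 < 1
     \<and> 3*(2*t*q+q^2) \<le> 2*(1 - t^2 - 3*(2*t*q+q^2)/2)*(t^2 + 3*(2*t*q+q^2)/2)"
    using K2 nn(4) by (simp add: algebra_simps)
  have S: "serial_child W = (p^2, 2*p*q+q^2, 2*p*q+q^2, 2*p*q+q^2, 1 - p^2 - 3*(2*p*q+q^2))"
    using W rs by (simp add: serial_child_def Let_def algebra_simps power2_eq_square)
  have P: "parallel_child W = (1 - t^2 - 3*(2*t*q+q^2), 2*t*q+q^2, 2*t*q+q^2, 2*t*q+q^2, t^2)"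
    using W rs by (simp add: parallel_child_def Let_def algebra_simps power2_eq_square)
  define a where "a = p^2"
  define b where "b = 2*p*q+q^2"
  define c where "c = t^2"
  define d where "d = 2*t*q+q^2"
  have Ka: "0 < 1 - a - 3*b/2" "1 - a - 3*b/2 < 1" "3*b \<le> 2*(1 - a - 3*b/2)*(a + 3*b/2)"
    using K1 unfolding a_def b_def by auto
  have Kc: "0 < 1 - c - 3*d/2" "1 - c - 3*d/2 < 1" "3*d \<le> 2*(1 - c - 3*d/2)*(c + 3*d/2)"
    using K2' unfolding c_def d_def by auto
  have eS: "tec_entropy (serial_child W) = 1 - a - 3*b/2"
    unfolding S a_def[symmetric] b_def[symmetric] tec_entropy_def by simp
  have qS: "quetelet (serial_child W) = 3*b / ((1 - a - 3*b/2) * (a + 3*b/2))"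
    unfolding quetelet_def eS unfolding S a_def[symmetric] b_def[symmetric] tec_edge_mass_def
    by (simp add: algebra_simps)
  have eP: "tec_entropy (parallel_child W) = c + 3*d/2"
    unfolding P c_def[symmetric] d_def[symmetric] tec_entropy_def by simp
  have qP: "quetelet (parallel_child W) = 3*d / ((1 - c - 3*d/2) * (c + 3*d/2))"
    unfolding quetelet_def eP unfolding P c_def[symmetric] d_def[symmetric] tec_edge_mass_def
    by (simp add: algebra_simps)
  have pos1: "(1 - a - 3*b/2) * (a + 3*b/2) > 0" using Ka(1,2) by simp
  have pos2: "(1 - c - 3*d/2) * (c + 3*d/2) > 0" using Kc(1,2) by simp
  have "quetelet (serial_child W) \<le> 2" unfolding qS using pos1 Ka(3)
    by (simp add: pos_divide_le_eq algebra_simps)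
  moreover have "quetelet (parallel_child W) \<le> 2" unfolding qP using pos2 Kc(3)
    by (simp add: pos_divide_le_eq algebra_simps)
  ultimately show ?thesis using eS eP Ka Kc by auto
qed

end
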